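(* Let $q\ge5$ be odd with $q\equiv\xi\pmod3$. (i) If $\xi=-1$, then $V_2=1$ and $V_1=(q-1)/2$. (ii) If $\xi=1$ and $2$ is a non-cube in $\mathbb F_q$, then $V_2=0$ and $V_1=\mathcal N_q$. (iii) If $\xi=1$ and $2$ is a cube in $\mathbb F_q$, then $V_2=3$ and $V_1=\mathcal N_q$.
   Context: For $m\in\{0,1,2,3\}$, $V_m$ is the number of $\beta\in\mathbb F_q$ such that the cubic equation $t^3-3\beta t^2-1=0$ has exactly $m$ distinct solutions $t\in\mathbb F_q$. $\mathcal N_q=\#\{\beta\in\mathbb F_q: 1+4\beta^3\text{ is a non-square in }\mathbb F_q\}$. *)

theory Defs
  imports Main "HOL-Library.Cardinality"
begin

text \<open>The finite field F_q is modelled as a type 'a of class {finite, field}, q = CARD('a).\<close>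

definition cubic_sols :: "'a::field \<Rightarrow> 'a set" where
  "cubic_sols \<beta> = {t. t^3 - 3 * \<beta> * t^2 - 1 = 0}"

definition V :: "'a::{finite,field} itself \<Rightarrow> nat \<Rightarrow> nat" where
  "V _ m = card {\<beta>::'a. card (cubic_sols \<beta>) = m}"

definition N :: "'a::{finite,field} itself \<Rightarrow> nat" where
  "N _ = card {\<beta>::'a. \<not> (\<exists>y. y^2 = 1 + 4 * \<beta>^3)}"

end

theory Submission imports Defs "HOL-Number_Theory.Residues" "HOL-Computational_Algebra.Polynomial"
begin

lemma char2:
  assumes "odd CARD('a::{finite,field})" shows "(2::'a) \<noteq> 0"
proof
  assume "(2::'a) = 0"
  hence "of_nat 2 = (0::'a)" by simp
  hence "CHAR('a) dvd 2" by (simp only: of_nat_eq_0_iff_char_dvd)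
  moreover have "CHAR('a) \<noteq> 1" by simp
  ultimately have "CHAR('a) = 2"
    using dvd_refl by (metis One_nat_def nat_dvd_1_iff_1 prime_nat_iff two_is_prime_nat)
  with CHAR_dvd_CARD[where 'a='a] assms show False by simp
qed

lemma char3:
  assumes "CARD('a::{finite,field}) mod 3 \<noteq> 0" shows "(3::'a) \<noteq> 0"
proof
  assume "(3::'a) = 0"
  hence "of_nat 3 = (0::'a)" by simp
  hence "CHAR('a) dvd 3" by (simp only: of_nat_eq_0_iff_char_dvd)
  moreover have "CHAR('a) \<noteq> 1" by simp
  moreover have "prime (3::nat)" by simp
  ultimately have "CHAR('a) = 3"
    by (metis One_nat_def prime_nat_iff)
  with CHAR_dvd_CARD[where 'a='a] assms show False by auto
qed

lemma fermat:
  fixes a :: "'a::{finite,field}"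
  assumes "a \<noteq> 0" shows "a ^ (CARD('a) - 1) = 1"
proof -
  define G where "G = (\<lparr>carrier = UNIV - {0::'a}, monoid.mult = (*), one = 1\<rparr> :: 'a monoid)"
  interpret comm_group G
    by (rule comm_groupI) (auto simp: G_def mult_ac intro!: bexI[of _ "inverse x" for x])
  have pw: "x [^]\<^bsub>G\<^esub> (n::nat) = x ^ n" for x n
    by (induction n) (auto simp: G_def)
  have "card (carrier G) = CARD('a) - 1" by (simp add: G_def card_Diff_singleton)
  moreover have "a [^]\<^bsub>G\<^esub> card (carrier G) = \<one>\<^bsub>G\<^esub>"
    by (rule power_order_eq_one) (auto simp: G_def assms)
  ultimately have "a [^]\<^bsub>G\<^esub> (CARD('a) - 1) = 1" by (simp add: G_def)
  thus ?thesis by (simp only: pw)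
qed

lemma sq_fiber:
  fixes z0 :: "'a::field" assumes "(2::'a) \<noteq> 0" "z0 \<noteq> 0"
  shows "{z. z^2 = z0^2} = {z0, -z0}" "card {z. z^2 = z0^2} = 2"
proof -
  show e: "{z. z^2 = z0^2} = {z0, -z0}"
  proof (intro equalityI subsetI)
    fix z assume "z \<in> {z. z^2 = z0^2}"
    hence "z = z0 \<or> z = -z0" using power2_eq_iff by blast
    thus "z \<in> {z0, -z0}" by blast
  qed auto
  have "z0 \<noteq> -z0"
  proof
    assume "z0 = -z0" hence "2 * z0 = 0" by (metis add_eq_0_iff mult_2)
    with assms show False by simp
  qed
  thus "card {z. z^2 = z0^2} = 2" unfolding e by simp
qed

lemma sq_count:
  assumes "(2::'a::{finite,field}) \<noteq> 0"
  shows "2 * card {y::'a. y \<noteq> 0 \<and> (\<exists>z. z^2 = y)} = CARD('a) - 1"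
proof -
  define S where "S = {y::'a. y \<noteq> 0 \<and> (\<exists>z. z^2 = y)}"
  have U: "UNIV - {0::'a} = (\<Union>y\<in>S. {z. z^2 = y})"
  proof (intro equalityI subsetI)
    fix z :: 'a assume "z \<in> UNIV - {0}"
    hence "z^2 \<in> S" by (auto simp: S_def)
    thus "z \<in> (\<Union>y\<in>S. {z. z^2 = y})" by blast
  next
    fix z :: 'a assume "z \<in> (\<Union>y\<in>S. {z. z^2 = y})"
    then obtain y where "y \<in> S" "z^2 = y" by blast
    thus "z \<in> UNIV - {0}" by (auto simp: S_def)
  qed
  have "card (\<Union>y\<in>S. {z. z^2 = y}) = (\<Sum>y\<in>S. card {z::'a. z^2 = y})"
    by (rule card_UN_disjoint) (simp_all, blast)
  also have "\<dots> = (\<Sum>y\<in>S. 2)"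
  proof (rule sum.cong)
    fix y assume "y \<in> S"
    then obtain z0 where "y = z0^2" "z0 \<noteq> 0" by (auto simp: S_def)
    thus "card {z::'a. z^2 = y} = 2" using sq_fiber[OF assms] by simp
  qed simp
  finally have "card (UNIV - {0::'a}) = 2 * card S" using U by simp
  thus ?thesis by (simp add: card_Diff_singleton S_def)
qed

lemma sq_range_count:
  assumes "(2::'a::{finite,field}) \<noteq> 0"
  shows "2 * card (range (\<lambda>z::'a. z^2)) = CARD('a) + 1"
proof -
  have "range (\<lambda>z::'a. z^2) = insert 0 {y::'a. y \<noteq> 0 \<and> (\<exists>z. z^2 = y)}"
  proof (intro equalityI subsetI)
    fix y assume "y \<in> range (\<lambda>z::'a. z^2)"
    thus "y \<in> insert 0 {y::'a. y \<noteq> 0 \<and> (\<exists>z. z^2 = y)}" by blast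
  next
    fix y assume "y \<in> insert 0 {y::'a. y \<noteq> 0 \<and> (\<exists>z. z^2 = y)}"
    thus "y \<in> range (\<lambda>z::'a. z^2)"
    proof
      assume "y = 0" thus ?thesis by (metis power_zero_numeral rangeI)
    qed blast
  qed
  hence "card (range (\<lambda>z::'a. z^2)) = card {y::'a. y \<noteq> 0 \<and> (\<exists>z. z^2 = y)} + 1"
    by simp
  moreover have "CARD('a) \<ge> 1" by (simp add: Suc_leI finite_UNIV_card_ge_0)
  ultimately show ?thesis using sq_count[OF assms] by simp
qed


lemma card3_eq2: "card {a, b, c} = 2 \<longleftrightarrow> (a = b \<and> b \<noteq> c) \<or> (a \<noteq> b \<and> (c = a \<or> c = b))"
  by (auto simp: card_insert_if)

lemma card3_eq1: "card {a, b, c} = 1 \<longleftrightarrow> (a = b \<and> b = c)"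
  by (auto simp: card_insert_if)

lemma roots_with_root:
  fixes \<beta> r :: "'a::field"
  assumes r: "r^3 + 3*\<beta>*r - 1 = 0" and two: "(2::'a) \<noteq> 0"
  shows "{s. s^3 + 3*\<beta>*s - 1 = 0} = insert r {s. (2*s+r)^2 = -3*r^2 - 12*\<beta>}"
    and "-3*(1+4*\<beta>^3) = (r^2+\<beta>)^2 * (-3*r^2 - 12*\<beta>)"
proof -
  have r1: "r^3 = 1 - 3*\<beta>*r" using r by (simp add: algebra_simps)
  have id: "4*(s^3 + 3*\<beta>*s - 1) = (s - r) * ((2*s+r)^2 - (-3*r^2 - 12*\<beta>))" for s
  proof -
    have "(s - r) * ((2*s+r)^2 - (-3*r^2 - 12*\<beta>)) = 4*(s^3 + 3*\<beta>*s) - 4*(r^3 + 3*\<beta>*r)"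
      by (simp add: algebra_simps power2_eq_square power3_eq_cube)
    also have "\<dots> = 4*(s^3 + 3*\<beta>*s) - 4*1" 
      using r by (simp add: eq_iff_diff_eq_0[symmetric])
    finally show ?thesis by (simp add: algebra_simps)
  qed
  have four: "(4::'a) \<noteq> 0" using two by (metis mult_2 mult_eq_0_iff numeral_Bit0 one_add_one)
  show "{s. s^3 + 3*\<beta>*s - 1 = 0} = insert r {s. (2*s+r)^2 = -3*r^2 - 12*\<beta>}"
  proof (intro equalityI subsetI)
    fix s assume "s \<in> {s. s^3 + 3*\<beta>*s - 1 = 0}"
    hence "(s - r) * ((2*s+r)^2 - (-3*r^2 - 12*\<beta>)) = 0" using id[of s] by simp
    thus "s \<in> insert r {s. (2*s+r)^2 = -3*r^2 - 12*\<beta>}" by auto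
  next
    fix s assume "s \<in> insert r {s. (2*s+r)^2 = -3*r^2 - 12*\<beta>}"
    hence "(s - r) * ((2*s+r)^2 - (-3*r^2 - 12*\<beta>)) = 0" by auto
    hence "4*(s^3 + 3*\<beta>*s - 1) = 0" using id[of s] by simp
    hence "s^3 + 3*\<beta>*s - 1 = 0" using four by (metis mult_eq_0_iff)
    thus "s \<in> {s. s^3 + 3*\<beta>*s - 1 = 0}" by simp
  qed
  have "(r^2+\<beta>)^2 * (r^2 + 4*\<beta>) = (r^3 + 3*\<beta>*r)^2 + 4*\<beta>^3"
    by (simp add: algebra_simps power2_eq_square power3_eq_cube)
  also have "r^3 + 3*\<beta>*r = 1" using r by (simp add: algebra_simps)
  finally have X: "(r^2+\<beta>)^2 * (r^2 + 4*\<beta>) = 1 + 4*\<beta>^3" by simp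
  have "(r^2+\<beta>)^2 * (-3*r^2 - 12*\<beta>) = -3 * ((r^2+\<beta>)^2 * (r^2 + 4*\<beta>))"
    by (simp add: algebra_simps)
  thus "-3*(1+4*\<beta>^3) = (r^2+\<beta>)^2 * (-3*r^2 - 12*\<beta>)"
    by (simp only: X)
qed


lemma roots_struct:
  fixes \<beta> :: "'a::{finite,field}"
  assumes two: "(2::'a) \<noteq> 0" and three: "(3::'a) \<noteq> 0"
  shows "card {s. s^3 + 3*\<beta>*s - 1 = 0} = 2 \<longleftrightarrow> 1 + 4*\<beta>^3 = 0"
    and "card {s. s^3 + 3*\<beta>*s - 1 = 0} = 1 \<longleftrightarrow>
           (\<exists>s. s^3 + 3*\<beta>*s - 1 = 0) \<and> \<not> (\<exists>y. y^2 = -3*(1+4*\<beta>^3))"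
proof -
  define R where "R = {s. s^3 + 3*\<beta>*s - 1 = 0}"
  define D where "D = 1 + 4*\<beta>^3"
  have four: "(4::'a) \<noteq> 0" using two by (metis mult_2 mult_eq_0_iff numeral_Bit0 one_add_one)
  have "(card R = 2 \<longleftrightarrow> D = 0) \<and> (card R = 1 \<longleftrightarrow> (\<exists>s. s \<in> R) \<and> \<not> (\<exists>y. y^2 = -3*D))"
  proof (cases "\<exists>s. s \<in> R")
    case False
    hence "R = {}" by blast
    moreover have "D \<noteq> 0"
    proof
      assume D0: "D = 0"
      hence b0: "\<beta> \<noteq> 0" by (auto simp: D_def)
      define x where "x = 1/(2*\<beta>)"
      have hx: "2*\<beta>*x = 1" using b0 two by (simp add: x_def)
      have "(8::'a) \<noteq> 0"
      proof -
        have "(2::'a)*4 \<noteq> 0" using two four by (simp only: mult_eq_0_iff) simp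
        thus ?thesis by simp
      qed
      hence nz: "8*\<beta>^3 \<noteq> 0" using b0 by simp
      have "8*\<beta>^3 * (x^3 + 3*\<beta>*x - 1) = (2*\<beta>*x)^3 + 12*\<beta>^3*(2*\<beta>*x) - 8*\<beta>^3"
        by (simp add: algebra_simps power3_eq_cube)
      also have "\<dots> = D" using hx by (simp add: D_def)
      finally have "x^3 + 3*\<beta>*x - 1 = 0" using D0 nz by simp
      hence "1/(2*\<beta>) \<in> R" by (simp add: R_def x_def)
      with False show False by blast
    qed
    ultimately show ?thesis using False by simp
  next
    case True
    then obtain r where r: "r^3 + 3*\<beta>*r - 1 = 0" by (auto simp: R_def)
    define \<delta> where "\<delta> = -3*r^2 - 12*\<beta>"
    have RR: "R = insert r {s. (2*s+r)^2 = \<delta>}"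
      using roots_with_root(1)[OF r two] by (simp add: R_def \<delta>_def)
    have key: "-3*D = (r^2+\<beta>)^2 * \<delta>"
      using roots_with_root(2)[OF r two] by (simp add: D_def \<delta>_def)
    have r0: "r \<noteq> 0" using r by auto
    show ?thesis
    proof (cases "\<exists>e. e^2 = \<delta>")
      case False
      hence R1: "R = {r}" using RR by auto
      have rb: "r^2 + \<beta> \<noteq> 0"
      proof
        assume "r^2 + \<beta> = 0"
        hence "\<beta> = -(r^2)" by (simp add: add_eq_0_iff)
        hence "\<delta> = (3*r)^2" by (simp add: \<delta>_def algebra_simps power2_eq_square)
        with False show False by blast
      qed
      have ns: "\<not> (\<exists>y. y^2 = -3*D)"
      proof
        assume "\<exists>y. y^2 = -3*D"
        then obtain y where "y^2 = -3*D" by blast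
        hence "(y/(r^2+\<beta>))^2 = \<delta>" using key rb by (simp add: power_divide)
        with False show False by blast
      qed
      hence "D \<noteq> 0" by (metis mult_zero_right power_zero_numeral)
      thus ?thesis using R1 ns by auto
    next
      case True
      then obtain e where e: "e^2 = \<delta>" by blast
      have sol: "(2*s+r)^2 = \<delta> \<longleftrightarrow> s = (e-r)/2 \<or> s = (-e-r)/2" for s
      proof -
        have "(2*s+r)^2 = \<delta> \<longleftrightarrow> 2*s+r = e \<or> 2*s+r = -e" using e power2_eq_iff by metis
        also have "\<dots> \<longleftrightarrow> s = (e-r)/2 \<or> s = (-e-r)/2" using two by (auto simp: field_simps)
        finally show ?thesis .
      qed
      have "{s. (2*s+r)^2 = \<delta>} = {(e-r)/2, (-e-r)/2}" unfolding sol by blast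
      hence R3: "R = {r, (e-r)/2, (-e-r)/2}" using RR by simp
      have sq: "-3*D = ((r^2+\<beta>)*e)^2" using key e by (simp add: power_mult_distrib)
      have n1: "card R \<noteq> 1"
      proof
        assume "card R = 1"
        hence "r = (e-r)/2 \<and> (e-r)/2 = (-e-r)/2" unfolding R3 card3_eq1 .
        hence "3*r = 0" using two by (auto simp: field_simps)
        with three r0 show False by simp
      qed
      have D0: "D = 0 \<longleftrightarrow> e = 0 \<or> r^2 + \<beta> = 0"
      proof -
        have "D = 0 \<longleftrightarrow> -3*D = 0" using three by simp
        also have "\<dots> \<longleftrightarrow> e = 0 \<or> r^2 + \<beta> = 0" using sq by auto
        finally show ?thesis .
      qed
      have twelve: "(12::'a) \<noteq> 0"
      proof -
        have "(4::'a)*3 \<noteq> 0" using four three by (simp only: mult_eq_0_iff) simp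
        thus ?thesis by simp
      qed
      have rb: "r^2 + \<beta> = 0 \<longleftrightarrow> e = 3*r \<or> e = -(3*r)"
      proof -
        have "(3*r)^2 - e^2 = (3*r)^2 - (-3*r^2 - 12*\<beta>)" using e by (simp add: \<delta>_def)
        also have "\<dots> = 12*(r^2+\<beta>)" by (simp add: algebra_simps power2_eq_square)
        finally have X: "(3*r)^2 - e^2 = 12*(r^2+\<beta>)" .
        have "r^2 + \<beta> = 0 \<longleftrightarrow> 12*(r^2+\<beta>) = 0" by (simp only: mult_eq_0_iff twelve simp_thms)
        also have "\<dots> \<longleftrightarrow> (3*r)^2 - e^2 = 0" by (simp only: X)
        also have "\<dots> \<longleftrightarrow> e^2 = (3*r)^2" by (metis eq_iff_diff_eq_0)
        also have "\<dots> \<longleftrightarrow> e = 3*r \<or> e = -(3*r)" by (rule power2_eq_iff)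
        finally show ?thesis .
      qed
      have c2: "card R = 2 \<longleftrightarrow> e = 0 \<or> e = 3*r \<or> e = -(3*r)"
      proof -
        have a1: "r = (e-r)/2 \<longleftrightarrow> e = 3*r" using two by (auto simp: field_simps)
        have a2: "(-e-r)/2 = r \<longleftrightarrow> e = -(3*r)" using two by (auto simp: field_simps minus_equation_iff[of e])
        have a3: "(-e-r)/2 = (e-r)/2 \<longleftrightarrow> e = 0" using two by (auto simp: field_simps)
        have a4: "e = 0 \<Longrightarrow> r \<noteq> (e-r)/2" using a1 three r0 by auto
        have a5: "\<not> (e = 3*r \<and> e = -(3*r))"
        proof
          assume "e = 3*r \<and> e = -(3*r)"
          hence "2*(3*r) = 0" by (metis add_eq_0_iff mult_2)
          with two three r0 show False by (simp only: mult_eq_0_iff) simp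
        qed
        have a3': "(e-r)/2 \<noteq> (-e-r)/2 \<longleftrightarrow> e \<noteq> 0" using a3 by metis
        show ?thesis unfolding R3 card3_eq2 using a1 a2 a3' a4 a5 by argo
      qed
      show ?thesis using c2 D0 rb n1 sq by auto
    qed
  qed
  thus "card {s. s^3 + 3*\<beta>*s - 1 = 0} = 2 \<longleftrightarrow> 1 + 4*\<beta>^3 = 0"
    and "card {s. s^3 + 3*\<beta>*s - 1 = 0} = 1 \<longleftrightarrow>
           (\<exists>s. s^3 + 3*\<beta>*s - 1 = 0) \<and> \<not> (\<exists>y. y^2 = -3*(1+4*\<beta>^3))"
    by (auto simp: R_def D_def)
qed


lemma cubic_transfer:
  fixes \<beta> :: "'a::{finite,field}"
  shows "card (cubic_sols \<beta>) = card {s. s^3 + 3*\<beta>*s - 1 = 0}"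
proof -
  have eq: "t^3 - 3*\<beta>*t^2 - 1 = 0 \<longleftrightarrow> (inverse t)^3 + 3*\<beta>*(inverse t) - 1 = 0" for t :: 'a
  proof (cases "t = 0")
    case True thus ?thesis by simp
  next
    case False
    have X: "t^3 * ((inverse t)^3 + 3*\<beta>*(inverse t) - 1) = -(t^3 - 3*\<beta>*t^2 - 1)"
      using False by (simp add: field_simps power2_eq_square power3_eq_cube)
    have t3: "t^3 \<noteq> 0" using False by simp
    have "(inverse t)^3 + 3*\<beta>*(inverse t) - 1 = 0 \<longleftrightarrow> t^3 * ((inverse t)^3 + 3*\<beta>*(inverse t) - 1) = 0"
      using t3 by simp
    also have "\<dots> \<longleftrightarrow> t^3 - 3*\<beta>*t^2 - 1 = 0" unfolding X by simp
    finally show ?thesis by simp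
  qed
  have "cubic_sols \<beta> = inverse ` {s. s^3 + 3*\<beta>*s - 1 = 0}"
  proof (intro equalityI subsetI)
    fix t assume "t \<in> cubic_sols \<beta>"
    hence "inverse t \<in> {s. s^3 + 3*\<beta>*s - 1 = 0}" using eq by (simp add: cubic_sols_def)
    moreover have "t = inverse (inverse t)" by simp
    ultimately show "t \<in> inverse ` {s. s^3 + 3*\<beta>*s - 1 = 0}" by blast
  next
    fix t assume "t \<in> inverse ` {s. s^3 + 3*\<beta>*s - 1 = 0}"
    then obtain s where "t = inverse s" "s^3 + 3*\<beta>*s - 1 = 0" by blast
    thus "t \<in> cubic_sols \<beta>" using eq[of t] by (simp add: cubic_sols_def)
  qed
  moreover have "inj (inverse :: 'a \<Rightarrow> 'a)" by (rule injI) (metis inverse_inverse_eq)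
  ultimately show ?thesis by (simp add: card_image inj_on_subset)
qed


lemma cube_inj2:
  fixes x y :: "'a::{finite,field}"
  assumes q: "CARD('a) mod 3 = 2" and xy: "x^3 = y^3"
  shows "x = y"
proof (cases "y = 0")
  case True thus ?thesis using xy by simp
next
  case False
  define z where "z = x / y"
  have z3: "z^3 = 1" using xy False by (simp add: z_def power_divide)
  hence z0: "z \<noteq> 0" by auto
  define k where "k = (CARD('a) - 2) div 3"
  have "CARD('a) - 1 = 3*k + 1" using q unfolding k_def by presburger
  hence "z^(CARD('a) - 1) = (z^3)^k * z" by (simp add: power_mult power_add)
  hence "z = 1" using fermat[OF z0] z3 by simp
  thus ?thesis using False by (simp add: z_def)
qed

lemma cube_surj2:
  assumes "CARD('a::{finite,field}) mod 3 = 2"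
  shows "\<exists>u::'a. u^3 = a"
proof -
  have "inj (\<lambda>x::'a. x^3)" using cube_inj2[OF assms] by (intro injI) 
  hence "surj (\<lambda>x::'a. x^3)" by (simp add: finite_UNIV_inj_surj)
  thus ?thesis by (metis surjD)
qed

lemma omega_facts:
  fixes e :: "'a::field"
  assumes two: "(2::'a) \<noteq> 0" and e: "e^2 = -3"
  shows "((e-1)/2)^3 = 1" and "((e-1)/2)^2 + (e-1)/2 + 1 = 0"
proof -
  define w where "w = (e-1)/2"
  have "4*(w^2 + w + 1) = (2*w)^2 + 2*(2*w) + 4" by (simp add: algebra_simps power2_eq_square)
  also have "2*w = e - 1" using two by (simp add: w_def)
  also have "(e-1)^2 + 2*(e-1) + 4 = e^2 + 3" by (simp add: algebra_simps power2_eq_square)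
  also have "\<dots> = 0" using e by simp
  finally have "4*(w^2 + w + 1) = 0" .
  moreover have "(4::'a) \<noteq> 0" using two by (metis mult_2 mult_eq_0_iff numeral_Bit0 one_add_one)
  ultimately have W: "w^2 + w + 1 = 0" by (metis mult_eq_0_iff)
  thus "((e-1)/2)^2 + (e-1)/2 + 1 = 0" by (simp add: w_def)
  have "w^3 - 1 = (w - 1) * (w^2 + w + 1)" by (simp add: algebra_simps power2_eq_square power3_eq_cube)
  hence "w^3 - 1 = 0" using W by simp
  thus "((e-1)/2)^3 = 1" by (simp add: w_def)
qed

lemma neg3_nonsq2:
  assumes q: "CARD('a::{finite,field}) mod 3 = 2" and two: "(2::'a) \<noteq> 0" and three: "(3::'a) \<noteq> 0"
  shows "\<not> (\<exists>e::'a. e^2 = -3)"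
proof
  assume "\<exists>e::'a. e^2 = -3"
  then obtain e :: 'a where e: "e^2 = -3" by blast
  have "((e-1)/2)^3 = 1^3" using omega_facts(1)[OF two e] by simp
  hence "(e-1)/2 = 1" using cube_inj2[OF q] by blast
  hence "e = 3" using two by (simp add: field_simps)
  hence "(12::'a) = 0" using e by simp
  moreover have "(4::'a)*3 \<noteq> 0" using two three
    by (metis mult_2 mult_eq_0_iff numeral_Bit0 one_add_one)
  ultimately show False by simp
qed

lemma nonsq_prod:
  fixes n m :: "'a::{finite,field}"
  assumes two: "(2::'a) \<noteq> 0" and n: "\<not> (\<exists>y. y^2 = n)" and m: "\<not> (\<exists>y. y^2 = m)"
  shows "\<exists>y. y^2 = n*m"
proof -
  define S where "S = {y::'a. y \<noteq> 0 \<and> (\<exists>z. z^2 = y)}"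
  define NS where "NS = {y::'a. y \<noteq> 0 \<and> \<not>(\<exists>z. z^2 = y)}"
  have "S \<union> NS = UNIV - {0}" "S \<inter> NS = {}" by (auto simp: S_def NS_def)
  hence "card S + card NS = CARD('a) - 1"
    by (metis card_Diff_singleton card_Un_disjoint finite iso_tuple_UNIV_I)
  with sq_count[OF two] have cNS: "card NS = card S" unfolding S_def by simp
  have n0: "n \<noteq> 0" using n by (metis power_zero_numeral)
  have sub: "(\<lambda>x. n*x) ` S \<subseteq> NS"
  proof
    fix y assume "y \<in> (\<lambda>x. n*x) ` S"
    then obtain z where z0: "z \<noteq> 0" and y: "y = n * z^2" by (auto simp: S_def)
    have "y \<noteq> 0" using z0 n0 y by simp
    moreover have "\<not>(\<exists>w. w^2 = y)"
    proof
      assume "\<exists>w. w^2 = y"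
      then obtain w where "w^2 = y" by blast
      hence "(w/z)^2 = n" using y z0 by (simp add: power_divide)
      with n show False by blast
    qed
    ultimately show "y \<in> NS" by (simp add: NS_def)
  qed
  have "card ((\<lambda>x. n*x) ` S) = card S" using n0 by (intro card_image inj_onI) simp
  hence "(\<lambda>x. n*x) ` S = NS" using sub cNS by (intro card_subset_eq) simp_all
  moreover have "m \<in> NS" using m by (auto simp: NS_def)
  ultimately obtain z where "m = n*z^2" by (auto simp: S_def)
  hence "(n*z)^2 = n*m" by (simp add: power2_eq_square)
  thus ?thesis by blast
qed

lemma cardano2:
  fixes \<beta> e :: "'a::field"
  assumes surj: "\<And>a::'a. \<exists>u. u^3 = a" and two: "(2::'a) \<noteq> 0"
    and e: "e^2 = 1 + 4*\<beta>^3"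
  shows "\<exists>s. s^3 + 3*\<beta>*s - 1 = 0"
proof -
  obtain f where f: "f^2 = 1 + 4*\<beta>^3" and f1: "1 + f \<noteq> 0"
  proof (cases "1 + e = 0")
    case True
    hence "1 + (-e) \<noteq> 0" using two by (metis add_eq_0_iff diff_zero one_add_one minus_diff_eq diff_add_cancel)
    thus ?thesis using that[of "-e"] e by simp
  next
    case False thus ?thesis using that[of e] e by simp
  qed
  define w where "w = (1 + f)/2"
  have w0: "w \<noteq> 0" using f1 two by (simp add: w_def)
  have ww: "w^2 - w = \<beta>^3"
  proof -
    have "4*(w^2 - w) = (2*w)^2 - 2*(2*w)" by (simp add: algebra_simps power2_eq_square)
    also have "2*w = 1 + f" using two by (simp add: w_def)
    also have "(1+f)^2 - 2*(1+f) = f^2 - 1" by (simp add: algebra_simps power2_eq_square)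
    also have "\<dots> = 4*\<beta>^3" using f by simp
    finally have "4*(w^2 - w) = 4*\<beta>^3" .
    moreover have "(4::'a) \<noteq> 0" using two by (metis mult_2 mult_eq_0_iff numeral_Bit0 one_add_one)
    ultimately show ?thesis by (metis mult_left_cancel)
  qed
  obtain u where u: "u^3 = w" using surj by blast
  have u0: "u \<noteq> 0" using u w0 by auto
  define s where "s = u - \<beta>/u"
  have "s^3 + 3*\<beta>*s - 1 = u^3 - \<beta>^3/u^3 - 1"
    using u0 by (simp add: s_def field_simps power2_eq_square power3_eq_cube)
  also have "\<dots> = (w^2 - w - \<beta>^3)/w" using u w0 by (simp add: field_simps power2_eq_square)
  also have "\<dots> = 0" using ww by simp
  finally show ?thesis by blast
qed


definition qmul :: "'a::field \<Rightarrow> 'a \<times> 'a \<Rightarrow> 'a \<times> 'a \<Rightarrow> 'a \<times> 'a" where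
  "qmul D x y = (fst x * fst y + D * snd x * snd y, fst x * snd y + snd x * fst y)"

definition qnorm :: "'a::field \<Rightarrow> 'a \<times> 'a \<Rightarrow> 'a" where
  "qnorm D x = fst x ^ 2 - D * snd x ^ 2"

definition TG :: "'a::field \<Rightarrow> ('a \<times> 'a) monoid" where
  "TG D = \<lparr>carrier = {x. qnorm D x = 1}, monoid.mult = qmul D, one = (1, 0)\<rparr>"

lemma qnorm_mul: "qnorm D (qmul D x y) = qnorm D x * qnorm D y"
  by (simp add: qnorm_def qmul_def algebra_simps power2_eq_square)

lemma qmul_assoc: "qmul D (qmul D x y) z = qmul D x (qmul D y z)"
  by (simp add: qmul_def algebra_simps)

lemma qmul_comm: "qmul D x y = qmul D y x"
  by (simp add: qmul_def algebra_simps)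

lemma TG_group: "comm_group (TG D)"
proof (rule comm_groupI)
  fix x assume x: "x \<in> carrier (TG D)"
  show "\<exists>y\<in>carrier (TG D). y \<otimes>\<^bsub>TG D\<^esub> x = \<one>\<^bsub>TG D\<^esub>"
  proof (intro bexI[of _ "(fst x, - snd x)"])
    show "(fst x, - snd x) \<otimes>\<^bsub>TG D\<^esub> x = \<one>\<^bsub>TG D\<^esub>"
      using x by (simp add: TG_def qmul_def qnorm_def power2_eq_square algebra_simps)
    show "(fst x, - snd x) \<in> carrier (TG D)" using x by (simp add: TG_def qnorm_def)
  qed
next
  show "\<And>x y. x \<in> carrier (TG D) \<Longrightarrow> y \<in> carrier (TG D) \<Longrightarrow> x \<otimes>\<^bsub>TG D\<^esub> y \<in> carrier (TG D)"
    by (simp add: TG_def qnorm_mul)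
  show "\<one>\<^bsub>TG D\<^esub> \<in> carrier (TG D)" by (simp add: TG_def qnorm_def)
  show "\<And>x y z. x \<otimes>\<^bsub>TG D\<^esub> y \<otimes>\<^bsub>TG D\<^esub> z = x \<otimes>\<^bsub>TG D\<^esub> (y \<otimes>\<^bsub>TG D\<^esub> z)"
    by (simp add: TG_def qmul_assoc)
  show "\<And>x y. x \<otimes>\<^bsub>TG D\<^esub> y = y \<otimes>\<^bsub>TG D\<^esub> x"
    by (simp add: TG_def qmul_comm[of D])
  show "\<And>x. \<one>\<^bsub>TG D\<^esub> \<otimes>\<^bsub>TG D\<^esub> x = x"
    by (simp add: TG_def qmul_def)
qed


lemma TG_card:
  fixes D :: "'a::{finite,field}"
  assumes two: "(2::'a) \<noteq> 0" and D: "\<not> (\<exists>y. y^2 = D)"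
  shows "card (carrier (TG D)) = CARD('a) + 1"
proof -
  define C where "C = {x::'a\<times>'a. qnorm D x = 1}"
  have D0: "D \<noteq> 0" using D by (metis power_zero_numeral)
  have dnz: "1 - D*m^2 \<noteq> 0" for m
  proof
    assume h: "1 - D*m^2 = 0"
    hence "m \<noteq> 0" by auto
    moreover have "D*m^2 = 1" using h by simp
    ultimately have "(1/m)^2 = D" by (simp add: field_simps)
    with D show False by blast
  qed
  define f where "f m = ((1 + D*m^2)/(1 - D*m^2), 2*m/(1 - D*m^2))" for m
  define g where "g x = snd x / (fst x + 1)" for x :: "'a\<times>'a"
  have fC: "f m \<in> C - {(-1,0)}" for m
  proof -
    have d: "1 - D*m^2 \<noteq> 0" by (rule dnz)
    have "qnorm D (f m) = ((1 + D*m^2)^2 - D*(2*m)^2) / (1 - D*m^2)^2"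
      by (simp add: f_def qnorm_def power_divide diff_divide_distrib)
    also have "(1 + D*m^2)^2 - D*(2*m)^2 = (1 - D*m^2)^2"
      by (simp add: algebra_simps power2_eq_square)
    also have "(1 - D*m^2)^2 / (1 - D*m^2)^2 = 1" using d by simp
    finally have "f m \<in> C" by (simp add: C_def)
    moreover have "f m \<noteq> (-1, 0)"
    proof
      assume "f m = (-1, 0)"
      hence "(1 + D*m^2)/(1 - D*m^2) = -1" by (simp add: f_def)
      hence "1 + D*m^2 = -(1 - D*m^2)" using d by (simp add: field_simps)
      hence "(2::'a) = 0" by (simp add: algebra_simps)
      with two show False by simp
    qed
    ultimately show ?thesis by simp
  qed
  have gf: "g (f m) = m" for m
  proof -
    have d: "1 - D*m^2 \<noteq> 0" by (rule dnz)
    have "fst (f m) + 1 = 2 / (1 - D*m^2)"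
      using d by (simp add: f_def field_simps)
    thus ?thesis using d two by (simp add: g_def f_def)
  qed
  have fg: "f (g x) = x" if x: "x \<in> C - {(-1,0)}" for x
  proof -
    obtain a b where ab: "x = (a, b)" by (cases x)
    have n: "a^2 - D*b^2 = 1" using x ab by (simp add: C_def qnorm_def)
    have a1: "a + 1 \<noteq> 0"
    proof
      assume "a + 1 = 0"
      hence a: "a = -1" by (simp add: eq_neg_iff_add_eq_0)
      hence "D*b^2 = 0" using n by simp
      hence "b = 0" using D0 by simp
      with a x ab show False by simp
    qed
    define m where "m = b/(a+1)"
    have mb: "m*(a+1) = b" using a1 by (simp add: m_def)
    have "(1 - D*m^2) * (a+1)^2 = (a+1)^2 - D*(m*(a+1))^2" by (simp add: algebra_simps power2_eq_square)
    also have "\<dots> = (a+1)^2 - D*b^2" by (simp only: mb)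
    also have "\<dots> = (a+1)^2 - D*b^2 - (a^2 - D*b^2 - 1)" using n by simp
    also have "\<dots> = 2*(a+1)" by (simp add: algebra_simps power2_eq_square)
    finally have E: "(1 - D*m^2) * (a+1)^2 = 2*(a+1)" .
    have a12: "(a+1)^2 \<noteq> 0" using a1 by simp
    have "1 - D*m^2 = 2*(a+1)/(a+1)^2" using E a12 by (subst eq_divide_eq) simp
    also have "\<dots> = 2/(a+1)" using a1 by (simp add: power2_eq_square del: distrib_left_numeral distrib_right_numeral)
    finally have dm: "1 - D*m^2 = 2/(a+1)" .
    have pm: "1 + D*m^2 = 2*a/(a+1)"
    proof -
      have "1 + D*m^2 = 2 - (1 - D*m^2)" by simp
      also have "\<dots> = 2*a/(a+1)" using a1 by (simp add: dm field_simps)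
      finally show ?thesis .
    qed
    have "f m = ((2*a/(a+1))/(2/(a+1)), 2*m/(2/(a+1)))" by (simp only: f_def dm pm)
    also have "\<dots> = (a, m*(a+1))" using a1 two by simp
    also have "\<dots> = (a, b)" using mb by simp
    finally have "f m = (a, b)" .
    thus ?thesis by (simp add: g_def ab m_def)
  qed
  have "bij_betw f UNIV (C - {(-1,0)})"
  proof (rule bij_betw_byWitness[where f'=g])
    show "\<forall>a\<in>UNIV. g (f a) = a" using gf by simp
    show "\<forall>a'\<in>C - {(- 1, 0)}. f (g a') = a'" using fg by blast
    show "f ` UNIV \<subseteq> C - {(- 1, 0)}"
    proof (rule subsetI)
      fix y assume "y \<in> f ` UNIV"
      then obtain m where "y = f m" by blast
      thus "y \<in> C - {(- 1, 0)}" using fC[of m] by (simp only:)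
    qed
  qed simp
  hence "card (C - {(-1,0)}) = CARD('a)" by (simp add: bij_betw_same_card)
  moreover have "(-1, 0) \<in> C" by (simp add: C_def qnorm_def)
  ultimately have "card C = CARD('a) + 1"
    by (metis card_Diff1_le card_Diff_singleton finite add.commute Suc_eq_plus1 card.remove)
  thus ?thesis by (simp add: TG_def C_def)
qed


lemma qmul_conj: "qmul D x (fst x, - snd x) = (qnorm D x, 0)"
  by (simp add: qmul_def qnorm_def power2_eq_square algebra_simps)

lemma cube_mul: "qmul D (qmul D (qmul D v z) (qmul D v z)) (qmul D v z)
   = qmul D (qmul D (qmul D v v) v) (qmul D (qmul D z z) z)"
  by (simp add: qmul_def algebra_simps)

lemma cardano1:
  fixes \<beta> :: "'a::{finite,field}"
  assumes q: "CARD('a) mod 3 = 1" and two: "(2::'a) \<noteq> 0"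
    and ns: "\<not> (\<exists>y. y^2 = 1 + 4*\<beta>^3)"
  shows "\<exists>s. s^3 + 3*\<beta>*s - 1 = 0"
proof -
  define D where "D = 1 + 4*\<beta>^3"
  have nsD: "\<not> (\<exists>y. y^2 = D)" using ns by (simp add: D_def)
  have D0: "D \<noteq> 0" using nsD by (metis power_zero_numeral)
  have b0: "\<beta> \<noteq> 0" using ns by (metis power_one add.right_neutral mult_zero_right power_zero_numeral zero_power2 one_power2)
  have four: "(4::'a) \<noteq> 0" using two by (metis mult_2 mult_eq_0_iff numeral_Bit0 one_add_one)
  obtain a b where ab: "a^2 - D*b^2 = -\<beta>"
  proof -
    define A where "A = range (\<lambda>z::'a. z^2)"
    define B where "B = (\<lambda>x. -\<beta> + D*x) ` A"
    have cA: "2 * card A = CARD('a) + 1" using sq_range_count[OF two] by (simp add: A_def)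
    have cB: "card B = card A" unfolding B_def using D0 by (intro card_image inj_onI) simp
    have "A \<inter> B \<noteq> {}"
    proof
      assume "A \<inter> B = {}"
      hence "card (A \<union> B) = card A + card B" by (simp add: card_Un_disjoint)
      moreover have "card (A \<union> B) \<le> CARD('a)" by (rule card_mono) simp_all
      ultimately show False using cA cB by simp
    qed
    then obtain y where yA: "y \<in> A" and yB: "y \<in> B" by blast
    from yA obtain a where ya: "y = a^2" by (auto simp: A_def)
    from yB obtain b where yb: "y = -\<beta> + D*b^2" by (auto simp: A_def B_def)
    have aa: "a^2 = -\<beta> + D*b^2" using ya yb by simp
    have "a^2 - D*b^2 = -\<beta>" by (subst aa) simp
    thus ?thesis by (rule that)
  qed
  define v where "v = (a, b)"
  have nv: "qnorm D v = -\<beta>" using ab by (simp add: v_def qnorm_def)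
  define v3 where "v3 = qmul D (qmul D v v) v"
  have nv3: "qnorm D v3 = -(\<beta>^3)" by (simp add: v3_def qnorm_mul nv power3_eq_cube)
  have nv30: "qnorm D v3 \<noteq> 0" using nv3 b0 by simp
  define w :: "'a \<times> 'a" where "w = (1/2, 1/2)"
  have nw: "qnorm D w = -(\<beta>^3)"
  proof -
    have "qnorm D w = (1 - D)/4" by (simp add: w_def qnorm_def power2_eq_square field_simps)
    also have "\<dots> = -(\<beta>^3)" using four by (simp add: D_def)
    finally show ?thesis .
  qed
  define k where "k = 1 / qnorm D v3"
  define X where "X = qmul D w (fst v3, - snd v3)"
  define t where "t = (k * fst X, k * snd X)"
  have t1: "qnorm D t = 1"
  proof -
    have "qnorm D t = k^2 * qnorm D X" by (simp add: t_def qnorm_def power_mult_distrib algebra_simps)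
    also have "qnorm D X = qnorm D w * qnorm D v3" by (simp only: X_def qnorm_mul) (simp add: qnorm_def)
    also have "k^2 * (qnorm D w * qnorm D v3) = 1" using nw nv3 nv30 by (simp add: k_def power2_eq_square)
    finally show ?thesis .
  qed
  have v3t: "qmul D v3 t = w"
  proof -
    have "qmul D v3 t = (k * fst (qmul D v3 X), k * snd (qmul D v3 X))"
      by (simp add: t_def qmul_def algebra_simps)
    also have "qmul D v3 X = qmul D w (qmul D v3 (fst v3, - snd v3))"
      by (simp add: X_def qmul_assoc[symmetric] qmul_comm[of D v3 w])
    also have "\<dots> = qmul D w (qnorm D v3, 0)" by (simp only: qmul_conj)
    finally show ?thesis using nv30 by (simp add: qmul_def k_def w_def)
  qed
  \<comment> \<open>take a cube root inside the norm one group\<close>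
  interpret G: comm_group "TG D" by (rule TG_group)
  have tC: "t \<in> carrier (TG D)" using t1 by (simp add: TG_def)
  have cardG: "card (carrier (TG D)) = CARD('a) + 1" using TG_card[OF two nsD] .
  have fin: "finite (carrier (TG D))" by simp
  have tq: "t [^]\<^bsub>TG D\<^esub> (CARD('a) + 1) = \<one>\<^bsub>TG D\<^esub>"
    using G.power_order_eq_one[OF fin tC] cardG by simp
  define kk where "kk = (CARD('a) + 2) div 3"
  have kk3: "3 * kk = (CARD('a) + 1) + 1" using q unfolding kk_def by presburger
  define z where "z = t [^]\<^bsub>TG D\<^esub> kk"
  have zC: "z \<in> carrier (TG D)" using tC by (simp add: z_def)
  have "z [^]\<^bsub>TG D\<^esub> (3::nat) = t [^]\<^bsub>TG D\<^esub> (3 * kk)"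
    using tC by (simp add: z_def G.nat_pow_pow mult.commute)
  also have "\<dots> = t [^]\<^bsub>TG D\<^esub> (CARD('a) + 1) \<otimes>\<^bsub>TG D\<^esub> t [^]\<^bsub>TG D\<^esub> (1::nat)"
    using tC by (simp add: kk3 G.nat_pow_mult)
  also have "\<dots> = t" using tC tq by simp
  finally have z3: "z [^]\<^bsub>TG D\<^esub> (3::nat) = t" .
  have "z [^]\<^bsub>TG D\<^esub> (3::nat) = qmul D (qmul D z z) z"
    using zC by (simp add: numeral_3_eq_3) (simp add: TG_def)
  hence z3': "qmul D (qmul D z z) z = t" using z3 by simp
  have nz: "qnorm D z = 1" using zC by (simp add: TG_def)
  define u where "u = qmul D v z"
  have nu: "qnorm D u = -\<beta>" by (simp add: u_def qnorm_mul nv nz)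
  have u3: "qmul D (qmul D u u) u = w"
    unfolding u_def cube_mul z3' v3_def[symmetric] by (rule v3t)
  obtain x y where uxy: "u = (x, y)" by (cases u)
  have e1: "x^2 - D*y^2 = -\<beta>" using nu uxy by (simp add: qnorm_def)
  have e2': "x^3 + 3*D*x*y^2 = 1/2"
  proof -
    have f1: "fst (qmul D (qmul D u u) u) = x^3 + 3*D*x*y^2"
      by (simp add: uxy qmul_def algebra_simps power2_eq_square power3_eq_cube)
    have f2: "fst (qmul D (qmul D u u) u) = 1/2" using u3 by (simp add: w_def)
    show ?thesis using f2 unfolding f1 .
  qed
  have e2: "2*(x^3 + 3*D*x*y^2) = 1" using two by (subst e2') simp
  have bb: "\<beta> = -(x^2 - D*y^2)" using e1 by simp
  have "(2*x)^3 + 3*\<beta>*(2*x) - 1 = 8*x^3 - 6*x*(x^2 - D*y^2) - 1"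
    by (subst bb) (simp add: algebra_simps power3_eq_cube)
  also have "\<dots> = 2*(x^3 + 3*D*x*y^2) - 1" by (simp add: algebra_simps power2_eq_square power3_eq_cube)
  also have "\<dots> = 0" by (subst e2) simp
  finally show ?thesis by blast
qed


lemma omega_exists:
  assumes q: "CARD('a::{finite,field}) mod 3 = 1" and q5: "CARD('a) \<ge> 5"
  shows "\<exists>\<omega>::'a. \<omega>^3 = 1 \<and> \<omega> \<noteq> 1"
proof (rule ccontr)
  assume H: "\<not> (\<exists>\<omega>::'a. \<omega>^3 = 1 \<and> \<omega> \<noteq> 1)"
  define m where "m = (CARD('a) - 1) div 3"
  have m3: "CARD('a) - 1 = 3*m" using q unfolding m_def by presburger
  have m1: "m \<ge> 1" using m3 q5 by linarith
  define p :: "'a poly" where "p = monom 1 m + [:-1:]"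
  have pe: "poly p x = x^m - 1" for x by (simp add: p_def poly_monom)
  have dp: "degree p = m" unfolding p_def using m1
    by (subst degree_add_eq_left) (simp_all add: degree_monom_eq)
  have p0: "p \<noteq> 0" using dp m1 by auto
  have "UNIV - {0::'a} \<subseteq> {x. poly p x = 0}"
  proof
    fix a :: 'a assume "a \<in> UNIV - {0}"
    hence a0: "a \<noteq> 0" by simp
    have "(a^m)^3 = a^(3*m)" by (simp add: power_mult[symmetric] mult.commute)
    also have "\<dots> = a^(CARD('a) - 1)" by (simp only: m3)
    also have "\<dots> = 1" by (rule fermat[OF a0])
    finally have "a^m = 1" using H by blast
    thus "a \<in> {x. poly p x = 0}" by (simp add: pe)
  qed
  hence "card (UNIV - {0::'a}) \<le> card {x. poly p x = 0}" by (intro card_mono) simp_all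
  also have "\<dots> \<le> m" using card_poly_roots_bound[OF p0] dp by simp
  finally have "CARD('a) - 1 \<le> m" by (simp add: card_Diff_singleton)
  with m3 m1 show False by linarith
qed


lemma V_reduce:
  assumes two: "(2::'a::{finite,field}) \<noteq> 0" and three: "(3::'a) \<noteq> 0"
  shows "V TYPE('a) 2 = card {\<beta>::'a. 1 + 4*\<beta>^3 = 0}"
    and "V TYPE('a) 1 = card {\<beta>::'a. (\<exists>s. s^3 + 3*\<beta>*s - 1 = 0) \<and> \<not> (\<exists>y. y^2 = -3*(1+4*\<beta>^3))}"
  unfolding V_def cubic_transfer roots_struct[OF two three] by simp_all

lemma four_nz: "(2::'a::field) \<noteq> 0 \<Longrightarrow> (4::'a) \<noteq> 0"
  by (metis mult_2 mult_eq_0_iff numeral_Bit0 one_add_one)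

lemma case_i:
  assumes q: "CARD('a::{finite,field}) mod 3 = 2" and odd: "odd CARD('a)"
  shows "V TYPE('a) 2 = 1 \<and> V TYPE('a) 1 = (CARD('a) - 1) div 2"
proof -
  have two: "(2::'a) \<noteq> 0" by (rule char2[OF odd])
  have three: "(3::'a) \<noteq> 0" by (rule char3) (use q in simp)
  have four: "(4::'a) \<noteq> 0" by (rule four_nz[OF two])
  have surj: "\<And>a::'a. \<exists>u. u^3 = a" by (rule cube_surj2[OF q])
  have n3: "\<not> (\<exists>e::'a. e^2 = -3)" by (rule neg3_nonsq2[OF q two three])
  obtain b0 :: 'a where b0: "b0^3 = -1/4" using surj by blast
  have "{\<beta>::'a. 1 + 4*\<beta>^3 = 0} = {b0}"
  proof (intro equalityI subsetI)
    fix \<beta> :: 'a assume "\<beta> \<in> {\<beta>. 1 + 4*\<beta>^3 = 0}"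
    hence "4*\<beta>^3 = -1" by (simp add: add_eq_0_iff)
    hence "\<beta>^3 = -1/4" using four by (simp add: field_simps)
    hence "\<beta>^3 = b0^3" using b0 by simp
    hence "\<beta> = b0" by (rule cube_inj2[OF q])
    thus "\<beta> \<in> {b0}" by simp
  next
    fix \<beta> :: 'a assume "\<beta> \<in> {b0}"
    thus "\<beta> \<in> {\<beta>. 1 + 4*\<beta>^3 = 0}" using b0 four by simp
  qed
  hence V2: "V TYPE('a) 2 = 1" using V_reduce(1)[OF two three] by simp
  define S where "S = {y::'a. y \<noteq> 0 \<and> (\<exists>z. z^2 = y)}"
  define P where "P x = (1 + 4*x \<in> S)" for x :: 'a
  have eqv: "((\<exists>s. s^3 + 3*\<beta>*s - 1 = 0) \<and> \<not> (\<exists>y. y^2 = -3*(1+4*\<beta>^3))) \<longleftrightarrow> P (\<beta>^3)"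
    for \<beta> :: 'a
  proof -
    define D where "D = 1 + 4*\<beta>^3"
    have "((\<exists>s. s^3 + 3*\<beta>*s - 1 = 0) \<and> \<not> (\<exists>y. y^2 = -3*D)) \<longleftrightarrow> D \<noteq> 0 \<and> (\<exists>z. z^2 = D)"
    proof
      assume h: "(\<exists>s. s^3 + 3*\<beta>*s - 1 = 0) \<and> \<not> (\<exists>y. y^2 = -3*D)"
      hence "D \<noteq> 0" by (metis mult_zero_right power_zero_numeral)
      moreover have "\<exists>z. z^2 = D"
      proof (rule ccontr)
        assume "\<not> (\<exists>z. z^2 = D)"
        hence "\<exists>y. y^2 = -3*D" using nonsq_prod[OF two] n3 by blast
        with h show False by blast
      qed
      ultimately show "D \<noteq> 0 \<and> (\<exists>z. z^2 = D)" by blast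
    next
      assume h: "D \<noteq> 0 \<and> (\<exists>z. z^2 = D)"
      then obtain e where e: "e^2 = D" by blast
      have e0: "e \<noteq> 0" using e h by auto
      have "\<exists>s. s^3 + 3*\<beta>*s - 1 = 0" by (rule cardano2[OF surj two]) (use e in \<open>simp add: D_def\<close>)
      moreover have "\<not> (\<exists>y. y^2 = -3*D)"
      proof
        assume "\<exists>y. y^2 = -3*D"
        then obtain y where "y^2 = -3*D" by blast
        hence "(y/e)^2 = -3" using e e0 h by (simp add: power_divide)
        with n3 show False by blast
      qed
      ultimately show "(\<exists>s. s^3 + 3*\<beta>*s - 1 = 0) \<and> \<not> (\<exists>y. y^2 = -3*D)" by blast
    qed
    thus ?thesis by (simp add: D_def P_def S_def)
  qed
  have "V TYPE('a) 1 = card {\<beta>::'a. P (\<beta>^3)}" using V_reduce(2)[OF two three] eqv by simp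
  also have "{\<beta>::'a. P (\<beta>^3)} = (\<lambda>b. b^3) -` {x. P x}" by auto
  also have "card \<dots> = card {x. P x}"
  proof (rule card_vimage_inj)
    show "inj (\<lambda>b::'a. b^3)" using cube_inj2[OF q] by (intro injI)
    show "{x. P x} \<subseteq> range (\<lambda>b::'a. b^3)" using surj by (metis rangeI subsetI)
  qed
  also have "{x. P x} = (\<lambda>y. (y - 1)/4) ` S"
  proof (intro equalityI subsetI)
    fix x assume "x \<in> {x. P x}"
    hence "1 + 4*x \<in> S" by (simp add: P_def)
    moreover have "x = ((1 + 4*x) - 1)/4" using four by simp
    ultimately show "x \<in> (\<lambda>y. (y - 1)/4) ` S" by blast
  next
    fix x assume "x \<in> (\<lambda>y. (y - 1)/4) ` S"
    then obtain y where y: "y \<in> S" "x = (y - 1)/4" by blast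
    have "4*x = y - 1" using y(2) four by (simp add: mult.commute)
    hence "1 + 4*x = y" by (metis add.commute diff_add_cancel)
    thus "x \<in> {x. P x}" using y(1) by (simp add: P_def)
  qed
  also have "card \<dots> = card S" using four by (intro card_image inj_onI) simp
  also have "card S = (CARD('a) - 1) div 2" using sq_count[OF two] by (simp add: S_def)
  finally show ?thesis using V2 by simp
qed


lemma neg2_helper:
  fixes X :: "'a::field"
  assumes t: "(2::'a) \<noteq> 0"
  shows "(-2*X = 2) = (X = -1)"
proof -
  have "(-2*X = 2) = (2*(-X) = 2*1)" by simp
  also have "\<dots> = (-X = 1)" using t by (rule mult_left_cancel)
  also have "\<dots> = (X = -1)" by (metis minus_minus)
  finally show ?thesis .
qed

lemma div_sq_helper:
  fixes y e D :: "'a::field"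
  assumes "e^2 = -3" "(3::'a) \<noteq> 0" "y^2 = -3*D"
  shows "(y/e)^2 = D"
  using assms by (simp add: power_divide)

lemma case_ii_iii:
  assumes q: "CARD('a::{finite,field}) mod 3 = 1" and odd: "odd CARD('a)" and q5: "CARD('a) \<ge> 5"
  shows "V TYPE('a) 1 = N TYPE('a)"
    and "\<not> (\<exists>c::'a. c^3 = 2) \<Longrightarrow> V TYPE('a) 2 = 0"
    and "(\<exists>c::'a. c^3 = 2) \<Longrightarrow> V TYPE('a) 2 = 3"
proof -
  have two: "(2::'a) \<noteq> 0" by (rule char2[OF odd])
  have three: "(3::'a) \<noteq> 0" by (rule char3) (use q in simp)
  have four: "(4::'a) \<noteq> 0" by (rule four_nz[OF two])
  obtain \<omega> :: 'a where w3: "\<omega>^3 = 1" and w1: "\<omega> \<noteq> 1" using omega_exists[OF q q5] by blast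
  have w2: "\<omega>^2 + \<omega> + 1 = 0"
  proof -
    have "(\<omega> - 1) * (\<omega>^2 + \<omega> + 1) = \<omega>^3 - 1" by (simp add: algebra_simps power2_eq_square power3_eq_cube)
    also have "\<dots> = 0" using w3 by simp
    finally show ?thesis using w1 by simp
  qed
  define e where "e = 2*\<omega> + 1"
  have e2: "e^2 = -3"
  proof -
    have "e^2 = 4*(\<omega>^2 + \<omega> + 1) - 3" by (simp add: e_def algebra_simps power2_eq_square)
    thus ?thesis using w2 by simp
  qed
  have e0: "e \<noteq> 0" using e2 three by auto
  have eqv: "((\<exists>s. s^3 + 3*\<beta>*s - 1 = 0) \<and> \<not> (\<exists>y. y^2 = -3*(1+4*\<beta>^3))) \<longleftrightarrow>
      \<not> (\<exists>y. y^2 = 1 + 4*\<beta>^3)" for \<beta> :: 'a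
  proof
    assume h: "(\<exists>s. s^3 + 3*\<beta>*s - 1 = 0) \<and> \<not> (\<exists>y. y^2 = -3*(1+4*\<beta>^3))"
    show "\<not> (\<exists>y. y^2 = 1 + 4*\<beta>^3)"
    proof
      assume "\<exists>y. y^2 = 1 + 4*\<beta>^3"
      then obtain y where "y^2 = 1 + 4*\<beta>^3" by blast
      hence "(e*y)^2 = -3*(1+4*\<beta>^3)" using e2 by (simp add: power_mult_distrib)
      with h show False by blast
    qed
  next
    assume h: "\<not> (\<exists>y. y^2 = 1 + 4*\<beta>^3)"
    have "\<exists>s. s^3 + 3*\<beta>*s - 1 = 0" by (rule cardano1[OF q two h])
    moreover have "\<not> (\<exists>y. y^2 = -3*(1+4*\<beta>^3))"
    proof
      assume "\<exists>y. y^2 = -3*(1+4*\<beta>^3)"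
      then obtain y where "y^2 = -3*(1+4*\<beta>^3)" by blast
      hence "(y/e)^2 = 1+4*\<beta>^3" by (rule div_sq_helper[OF e2 three])
      with h show False by blast
    qed
    ultimately show "(\<exists>s. s^3 + 3*\<beta>*s - 1 = 0) \<and> \<not> (\<exists>y. y^2 = -3*(1+4*\<beta>^3))" by blast
  qed
  show "V TYPE('a) 1 = N TYPE('a)"
    using V_reduce(2)[OF two three] eqv by (simp add: N_def)
  have cube: "1 + 4*\<beta>^3 = 0 \<longleftrightarrow> (-2*\<beta>)^3 = 2" for \<beta> :: 'a
  proof -
    have "(-2*\<beta>)^3 = -2*(4*\<beta>^3)" by (simp add: algebra_simps power3_eq_cube)
    hence "(-2*\<beta>)^3 = 2 \<longleftrightarrow> -2*(4*\<beta>^3) = 2" by simp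
    also have "\<dots> \<longleftrightarrow> 4*\<beta>^3 = -1" by (rule neg2_helper[OF two])
    also have "\<dots> \<longleftrightarrow> 1 + 4*\<beta>^3 = 0" by (auto simp: add_eq_0_iff)
    finally show ?thesis by simp
  qed
  show "\<not> (\<exists>c::'a. c^3 = 2) \<Longrightarrow> V TYPE('a) 2 = 0"
  proof -
    assume nc: "\<not> (\<exists>c::'a. c^3 = 2)"
    have "{\<beta>::'a. 1 + 4*\<beta>^3 = 0} = {}" using nc cube by blast
    thus ?thesis using V_reduce(1)[OF two three] by simp
  qed
  show "(\<exists>c::'a. c^3 = 2) \<Longrightarrow> V TYPE('a) 2 = 3"
  proof -
    assume "\<exists>c::'a. c^3 = 2"
    then obtain c :: 'a where c: "c^3 = 2" by blast
    have c0: "c \<noteq> 0" using c two by auto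
    define h where "h x = -(c*x)/2" for x :: 'a
    have roots1: "x^3 = 1 \<longleftrightarrow> x \<in> {1, \<omega>, \<omega>^2}" for x :: 'a
    proof -
      have "(x - 1)*(x - \<omega>)*(x - \<omega>^2) = x^3 - (\<omega>^2+\<omega>+1)*x^2 + (\<omega>^2+\<omega>+1)*\<omega>*x - \<omega>^3"
        by (simp add: algebra_simps power2_eq_square power3_eq_cube)
      also have "\<dots> = x^3 - 1" using w2 w3 by simp
      finally have "(x - 1)*(x - \<omega>)*(x - \<omega>^2) = x^3 - 1" .
      hence "x^3 = 1 \<longleftrightarrow> (x - 1)*(x - \<omega>)*(x - \<omega>^2) = 0" by simp
      thus ?thesis by auto
    qed
    have set: "{\<beta>::'a. 1 + 4*\<beta>^3 = 0} = h ` {1, \<omega>, \<omega>^2}"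
    proof (intro equalityI subsetI)
      fix \<beta> :: 'a assume "\<beta> \<in> {\<beta>. 1 + 4*\<beta>^3 = 0}"
      hence b: "(-2*\<beta>)^3 = c^3" using cube c by simp
      define x where "x = -2*\<beta>/c"
      have "x^3 = (-2*\<beta>)^3 / c^3" by (simp only: x_def power_divide)
      also have "\<dots> = c^3 / c^3" by (simp only: b)
      also have "\<dots> = 1" using c0 by simp
      finally have "x^3 = 1" .
      hence "x \<in> {1, \<omega>, \<omega>^2}" using roots1 by blast
      moreover have "\<beta> = h x" using c0 two by (simp add: h_def x_def)
      ultimately show "\<beta> \<in> h ` {1, \<omega>, \<omega>^2}" by blast
    next
      fix \<beta> :: 'a assume "\<beta> \<in> h ` {1, \<omega>, \<omega>^2}"
      then obtain x where x: "x \<in> {1, \<omega>, \<omega>^2}" "\<beta> = h x" by blast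
      have x3: "x^3 = 1" using roots1 x(1) by blast
      have "-2*\<beta> = c*x" using x(2) two by (simp add: h_def)
      hence "(-2*\<beta>)^3 = 2" using x3 c by (simp add: power_mult_distrib)
      thus "\<beta> \<in> {\<beta>. 1 + 4*\<beta>^3 = 0}" using cube by simp
    qed
    have "inj h" using c0 two by (intro injI) (simp add: h_def)
    hence "card (h ` {1, \<omega>, \<omega>^2}) = card {1, \<omega>, \<omega>^2}" by (metis card_image inj_on_subset subset_UNIV)
    also have "card {1, \<omega>, \<omega>^2} = 3"
    proof -
      have a: "\<omega>^2 \<noteq> 1"
      proof
        assume "\<omega>^2 = 1"
        hence "\<omega> = \<omega>^3" by (simp add: power3_eq_cube power2_eq_square)
        with w3 w1 show False by simp
      qed
      have b: "\<omega>^2 \<noteq> \<omega>"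
      proof
        assume "\<omega>^2 = \<omega>"
        moreover have "\<omega> \<noteq> 0" using w3 by auto
        ultimately have "\<omega> = 1" by (simp add: power2_eq_square)
        with w1 show False by simp
      qed
      show ?thesis using a b w1 by simp
    qed
    finally show ?thesis using V_reduce(1)[OF two three] set by simp
  qed
qed

theorem lemma4p4:
  assumes "card (UNIV::'a::{finite,field} set) \<ge> 5" and "odd CARD('a)"
  shows "(CARD('a) mod 3 = 2 \<longrightarrow>
            V TYPE('a) 2 = 1 \<and> V TYPE('a) 1 = (CARD('a) - 1) div 2)
       \<and> (CARD('a) mod 3 = 1 \<and> \<not> (\<exists>c::'a. c^3 = 2) \<longrightarrow>
            V TYPE('a) 2 = 0 \<and> V TYPE('a) 1 = N TYPE('a))
       \<and> (CARD('a) mod 3 = 1 \<and> (\<exists>c::'a. c^3 = 2) \<longrightarrow>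
            V TYPE('a) 2 = 3 \<and> V TYPE('a) 1 = N TYPE('a))"
  using case_i[OF _ assms(2)] case_ii_iii[OF _ assms(2) assms(1)] by blast

end
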